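(* Let $1<r<\infty$ and let $X_n=(\mathbb{C}^n,\|\cdot\|)$ and $Y_n=(\mathbb{C}^n,\|\cdot\|)$ be Banach lattices with $M_{(r)}(X_n)=M^{(r)}(Y_n)=1$. Then for any index set $J\subset\mathbb{N}_0^n$, $$\boldsymbol{\chi_{\mathrm{mon}}}\big(\mathcal{P}_J(X_n)\big)\le\boldsymbol{\chi_{\mathrm{mon}}}\big(\mathcal{P}_J(Y_n)\big).$$
   Context: A Banach lattice $X_n=(\mathbb{C}^n,\|\cdot\|)$ is a norm with $\|z\|\le\|w\|$ whenever $|z_k|\le|w_k|$ for all $k$. The $r$-convexity constant $M^{(r)}(Y_n)$ is the least $C$ with $\|(\sum_k|x_k|^r)^{1/r}\|\le C(\sum_k\|x_k\|^r)^{1/r}$ for all finite families in $Y_n$; the $r$-concavity constant $M_{(r)}(X_n)$ is the least $C$ with $(\sum_k\|x_k\|^r)^{1/r}\le C\|(\sum_k|x_k|^r)^{1/r}\|$ (operations coordinatewise). $\mathcal{P}_J(X_n)$: polynomials $\sum_{\alpha\in J}c_\alpha z^\alpha$ with sup norm over the open unit ball. $\boldsymbol{\chi_{\mathrm{mon}}}(\mathcal{P}_J(X_n))$: least $K$ with $\|\sum\varepsilon_\alpha c_\alpha z^\alpha\|\le K\|\sum c_\alpha z^\alpha\|$ for all scalars and all $|\varepsilon_\alpha|=1$. *)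

theory Defs
  imports "HOL-Analysis.Analysis" "HOL-Library.Extended_Real"
begin

text \<open>Vectors in C^n are functions 'n => complex for a finite index type 'n
  (n = CARD('n)).  A Banach lattice norm on C^n is a norm that is monotone
  with respect to the coordinatewise modulus.\<close>

definition lattice_norm :: "(('n::finite \<Rightarrow> complex) \<Rightarrow> real) \<Rightarrow> bool" where
  "lattice_norm N \<longleftrightarrow>
     (\<forall>x. N x = 0 \<longleftrightarrow> x = (\<lambda>_. 0)) \<and>
     (\<forall>x y. N (\<lambda>i. x i + y i) \<le> N x + N y) \<and>
     (\<forall>c x. N (\<lambda>i. c * x i) = cmod c * N x) \<and>
     (\<forall>z w. (\<forall>k. cmod (z k) \<le> cmod (w k)) \<longrightarrow> N z \<le> N w)"

definition rsum_vec :: "real \<Rightarrow> nat \<Rightarrow> (nat \<Rightarrow> ('n \<Rightarrow> complex)) \<Rightarrow> ('n \<Rightarrow> complex)" where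
  "rsum_vec r m x = (\<lambda>i. complex_of_real ((\<Sum>k<m. cmod (x k i) powr r) powr (1/r)))"

text \<open>r-convexity constant M^(r): least C with
  ||(sum|x_k|^r)^(1/r)|| <= C (sum ||x_k||^r)^(1/r).\<close>

definition convexity_const :: "(('n::finite \<Rightarrow> complex) \<Rightarrow> real) \<Rightarrow> real \<Rightarrow> real" where
  "convexity_const N r = Inf {C. C \<ge> 0 \<and>
     (\<forall>m x. N (rsum_vec r m x) \<le> C * (\<Sum>k<m. N (x k) powr r) powr (1/r))}"

text \<open>r-concavity constant M_(r): least C with
  (sum ||x_k||^r)^(1/r) <= C ||(sum|x_k|^r)^(1/r)||.\<close>

definition concavity_const :: "(('n::finite \<Rightarrow> complex) \<Rightarrow> real) \<Rightarrow> real \<Rightarrow> real" where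
  "concavity_const N r = Inf {C. C \<ge> 0 \<and>
     (\<forall>m x. (\<Sum>k<m. N (x k) powr r) powr (1/r) \<le> C * N (rsum_vec r m x))}"

definition poly_eval :: "(('n::finite \<Rightarrow> nat) \<Rightarrow> complex) \<Rightarrow> ('n \<Rightarrow> nat) set \<Rightarrow> ('n \<Rightarrow> complex) \<Rightarrow> complex" where
  "poly_eval c F z = (\<Sum>\<alpha>\<in>F. c \<alpha> * (\<Prod>i\<in>UNIV. z i ^ \<alpha> i))"

definition poly_sup :: "(('n::finite \<Rightarrow> complex) \<Rightarrow> real) \<Rightarrow> (('n \<Rightarrow> nat) \<Rightarrow> complex) \<Rightarrow> ('n \<Rightarrow> nat) set \<Rightarrow> real" where
  "poly_sup N c F = Sup {cmod (poly_eval c F z) | z. N z < 1}"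

text \<open>Unconditional constant of the monomial basis of P_J(X_n), as an extended real
  (equal to infinity if no finite constant works).  Polynomials in P_J are the
  finite sums over finite F contained in J.\<close>

definition chi_mon :: "(('n::finite \<Rightarrow> complex) \<Rightarrow> real) \<Rightarrow> ('n \<Rightarrow> nat) set \<Rightarrow> ereal" where
  "chi_mon N J = Inf (ereal ` {K. K \<ge> 0 \<and>
     (\<forall>F c \<epsilon>. finite F \<longrightarrow> F \<subseteq> J \<longrightarrow> (\<forall>\<alpha>. cmod (\<epsilon> \<alpha>) = 1) \<longrightarrow>
        poly_sup N (\<lambda>\<alpha>. \<epsilon> \<alpha> * c \<alpha>) F \<le> K * poly_sup N c F)})"

end

theory Submission
  imports Defs
begin

definition ev :: "'n \<Rightarrow> ('n::finite \<Rightarrow> complex)" where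
  "ev i = (\<lambda>j. if j = i then 1 else 0)"

lemma ln_zero: "N (\<lambda>_. 0) = 0" if "lattice_norm N" using that unfolding lattice_norm_def by auto

lemma ln_mono: "lattice_norm N \<Longrightarrow> (\<And>k. cmod (z k) \<le> cmod (w k)) \<Longrightarrow> N z \<le> N w"
  unfolding lattice_norm_def by blast

lemma ln_homog: "lattice_norm N \<Longrightarrow> N (\<lambda>i. c * x i) = cmod c * N x"
  unfolding lattice_norm_def by blast

lemma ln_tri: "lattice_norm N \<Longrightarrow> N (\<lambda>i. x i + y i) \<le> N x + N y"
  unfolding lattice_norm_def by blast

lemma ln_nonneg: "lattice_norm N \<Longrightarrow> 0 \<le> N x"
  using ln_mono[of N "\<lambda>_. 0" x] ln_zero[of N] by auto

lemma ln_pos: "lattice_norm N \<Longrightarrow> x \<noteq> (\<lambda>_. 0) \<Longrightarrow> 0 < N x"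
  using ln_nonneg[of N x] unfolding lattice_norm_def by force

lemma ln_abs: "lattice_norm N \<Longrightarrow> N (\<lambda>i. complex_of_real (cmod (x i))) = N x"
  by (rule antisym; rule ln_mono; simp)

lemma ln_coord: "lattice_norm N \<Longrightarrow> cmod (x i) * N (ev i) \<le> N x"
proof -
  assume N: "lattice_norm N"
  have "cmod (x i) * N (ev i) = N (\<lambda>j. x i * ev i j)" using ln_homog[OF N] by simp
  also have "\<dots> \<le> N x" by (rule ln_mono[OF N]) (auto simp: ev_def)
  finally show ?thesis .
qed

lemma ln_ev_pos: "lattice_norm N \<Longrightarrow> 0 < N (ev i)"
  by (rule ln_pos) (auto simp: ev_def fun_eq_iff)

lemma ln_coord': "lattice_norm N \<Longrightarrow> cmod (x i) \<le> N x / N (ev i)"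
  using ln_coord[of N x i] ln_ev_pos[of N i] by (simp add: field_simps)

lemma ln_neg: "lattice_norm N \<Longrightarrow> N (\<lambda>i. - x i) = N x"
  using ln_homog[of N "-1" x] by simp

lemma ln_lip: "lattice_norm N \<Longrightarrow> \<bar>N x - N y\<bar> \<le> N (\<lambda>i. x i - y i)"
proof -
  assume N: "lattice_norm N"
  have 1: "N x \<le> N y + N (\<lambda>i. x i - y i)" using ln_tri[OF N, of y "\<lambda>i. x i - y i"] by simp
  have 2: "N y \<le> N x + N (\<lambda>i. y i - x i)" using ln_tri[OF N, of x "\<lambda>i. y i - x i"] by simp
  have 3: "N (\<lambda>i. y i - x i) = N (\<lambda>i. x i - y i)" using ln_neg[OF N, of "\<lambda>i. x i - y i"] by simp
  show ?thesis using 1 2 3 by linarith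
qed

definition one_v :: "'n::finite \<Rightarrow> complex" where "one_v = (\<lambda>_. 1)"

lemma ln_upper: "lattice_norm N \<Longrightarrow> (\<And>i. cmod (x i) \<le> M) \<Longrightarrow> N x \<le> M * N one_v"
proof -
  assume N: "lattice_norm N" and M: "\<And>i. cmod (x i) \<le> M"
  have M0: "0 \<le> M" using M[of undefined] norm_ge_zero order_trans by blast
  have "N x \<le> N (\<lambda>i. complex_of_real M * one_v i)"
    by (rule ln_mono[OF N]) (use M M0 in \<open>auto simp: one_v_def\<close>)
  also have "\<dots> = M * N one_v" using ln_homog[OF N] M0 by simp
  finally show ?thesis .
qed

lemma ln_cont:
  assumes N: "lattice_norm N" and g: "\<And>i. ((\<lambda>v. g v i) \<longlongrightarrow> g0 i) F"
  shows "((\<lambda>v. N (g v)) \<longlongrightarrow> N g0) F"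
proof -
  have "((\<lambda>v. N (g v) - N g0) \<longlongrightarrow> 0) F"
  proof (rule Lim_null_comparison)
    show "\<forall>\<^sub>F v in F. norm (N (g v) - N g0) \<le> (\<Sum>i\<in>UNIV. cmod (g v i - g0 i)) * N one_v"
    proof (rule always_eventually, intro allI)
      fix v
      have "norm (N (g v) - N g0) \<le> N (\<lambda>i. g v i - g0 i)" using ln_lip[OF N] by simp
      also have "\<dots> \<le> (\<Sum>i\<in>UNIV. cmod (g v i - g0 i)) * N one_v"
        by (rule ln_upper[OF N]) (rule member_le_sum, auto)
      finally show "norm (N (g v) - N g0) \<le> (\<Sum>i\<in>UNIV. cmod (g v i - g0 i)) * N one_v" .
    qed
    have "((\<lambda>v. (\<Sum>i\<in>UNIV. cmod (g v i - g0 i)) * N one_v) \<longlongrightarrow> (\<Sum>i\<in>UNIV. cmod (g0 i - g0 i)) * N one_v) F"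
      by (intro tendsto_intros g)
    then show "((\<lambda>v. (\<Sum>i\<in>UNIV. cmod (g v i - g0 i)) * N one_v) \<longlongrightarrow> 0) F" by simp
  qed
  then show ?thesis by (simp add: LIM_zero_iff)
qed


lemma pr_inv1: "0 \<le> x \<Longrightarrow> 0 < r \<Longrightarrow> (x powr (1/r)) powr r = (x::real)"
  by (simp add: powr_powr powr_one)

lemma pr_inv2: "0 \<le> x \<Longrightarrow> 0 < r \<Longrightarrow> (x powr r) powr (1/r) = (x::real)"
  by (simp add: powr_powr powr_one)

definition rt :: "real \<Rightarrow> real^'n \<Rightarrow> ('n::finite \<Rightarrow> complex)" where
  "rt r v = (\<lambda>i. complex_of_real (v$i powr (1/r)))"

definition PN :: "(('n::finite \<Rightarrow> complex) \<Rightarrow> real) \<Rightarrow> real \<Rightarrow> real^'n \<Rightarrow> real" where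
  "PN N r v = N (rt r v) powr r"

definition nneg :: "real^'n::finite \<Rightarrow> bool" where "nneg v \<longleftrightarrow> (\<forall>i. 0 \<le> v$i)"

lemma PN_nonneg: "0 \<le> PN N r v" by (simp add: PN_def)

lemma PN_homog:
  assumes N: "lattice_norm N" and r: "0 < r" and c: "0 \<le> c" and v: "nneg v"
  shows "PN N r (c *\<^sub>R v) = c * PN N r v"
proof -
  have "rt r (c *\<^sub>R v) = (\<lambda>i. complex_of_real (c powr (1/r)) * rt r v i)"
    using c v by (auto simp: rt_def nneg_def powr_mult fun_eq_iff)
  then have "N (rt r (c *\<^sub>R v)) = c powr (1/r) * N (rt r v)"
    using ln_homog[OF N] by simp
  then show ?thesis unfolding PN_def using c r ln_nonneg[OF N]
    by (simp add: powr_mult pr_inv1)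
qed

lemma PN_mono:
  assumes N: "lattice_norm N" and r: "0 < r" and v: "nneg v" and le: "\<And>i. v$i \<le> u$i"
  shows "PN N r v \<le> PN N r u"
proof -
  have "N (rt r v) \<le> N (rt r u)"
    by (rule ln_mono[OF N]) (use v le r in \<open>auto simp: rt_def nneg_def intro!: powr_mono2\<close>)
  then show ?thesis unfolding PN_def using r ln_nonneg[OF N] by (simp add: powr_mono2)
qed

lemma PN_abs:
  assumes N: "lattice_norm N" and r: "0 < r"
  shows "PN N r (\<chi> i. cmod (z i) powr r) = N z powr r"
proof -
  have "rt r (\<chi> i. cmod (z i) powr r) = (\<lambda>i. complex_of_real (cmod (z i)))"
    using r by (auto simp: rt_def pr_inv2 fun_eq_iff)
  then show ?thesis unfolding PN_def using ln_abs[OF N] by simp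
qed

lemma PN_pos:
  assumes N: "lattice_norm N" and r: "0 < r" and v: "nneg v" "v \<noteq> 0"
  shows "0 < PN N r v"
proof -
  obtain i where "v$i \<noteq> 0" using v by (metis vec_eq_iff zero_index)
  then have "rt r v \<noteq> (\<lambda>_. 0)" by (auto simp: rt_def fun_eq_iff dest!: spec[of _ i])
  then have "0 < N (rt r v)" using ln_pos[OF N] by auto
  then show ?thesis unfolding PN_def by simp
qed

lemma PN_axis_pos:
  assumes N: "lattice_norm N" and r: "0 < r"
  shows "0 < PN N r (axis i 1)"
  by (rule PN_pos[OF N r]) (auto simp: nneg_def axis_def vec_eq_iff)

lemma PN_coord:
  assumes N: "lattice_norm N" and r: "0 < r" and v: "nneg v"
  shows "v$i * PN N r (axis i 1) \<le> PN N r v"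
proof -
  have "v$i * PN N r (axis i 1) = PN N r (v$i *\<^sub>R axis i 1)"
    using PN_homog[OF N r, of "v$i" "axis i 1"] v by (auto simp: nneg_def axis_def)
  also have "\<dots> \<le> PN N r v"
    by (rule PN_mono[OF N r]) (use v in \<open>auto simp: nneg_def axis_def\<close>)
  finally show ?thesis .
qed

lemma PN_cont:
  assumes N: "lattice_norm N" and r: "0 < r"
  shows "continuous_on {v. nneg v} (PN N r)"
  unfolding continuous_on_def
proof
  fix v0 :: "real^'a" assume v0: "v0 \<in> {v. nneg v}"
  let ?F = "at v0 within {v. nneg v}"
  have ev: "eventually (\<lambda>v. nneg v) ?F" by (simp add: eventually_at_topological) blast
  have "((\<lambda>v. N (rt r v)) \<longlongrightarrow> N (rt r v0)) ?F"
    unfolding rt_def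
  proof (rule ln_cont[OF N])
    fix i
    have t1: "((\<lambda>v. v$i) \<longlongrightarrow> v0$i) ?F" by (intro tendsto_intros)
    have t2: "eventually (\<lambda>v. 0 \<le> v$i) ?F" using ev by eventually_elim (simp add: nneg_def)
    have "((\<lambda>v. v$i powr (1/r)) \<longlongrightarrow> v0$i powr (1/r)) ?F"
      by (rule tendsto_powr'[OF t1 tendsto_const]) (use t2 r in auto)
    then show "((\<lambda>v. complex_of_real (v$i powr (1/r))) \<longlongrightarrow> complex_of_real (v0$i powr (1/r))) ?F"
      by (rule tendsto_of_real)
  qed
  then show "(PN N r \<longlongrightarrow> PN N r v0) ?F"
    unfolding PN_def using r ln_nonneg[OF N]
    by (intro tendsto_powr') (auto intro: always_eventually)
qed

lemma closed_nneg: "closed {v::real^'n::finite. nneg v}"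
proof -
  have "{v::real^'n. nneg v} = (\<Inter>i. {v. 0 \<le> v$i})" by (auto simp: nneg_def)
  moreover have "closed {v::real^'n. 0 \<le> v$i}" for i
    by (rule closed_Collect_le) (auto intro!: continuous_intros)
  ultimately show ?thesis by auto
qed


lemma inf_one:
  fixes L R :: "nat \<Rightarrow> (nat \<Rightarrow> 'a) \<Rightarrow> real"
  assumes I: "Inf {C. C \<ge> 0 \<and> (\<forall>m x. L m x \<le> C * R m x)} = 1"
    and C0: "0 \<le> C0" "\<forall>m x. L m x \<le> C0 * R m x" and R: "\<And>m x. 0 \<le> R m x"
  shows "L m x \<le> R m x"
proof (rule ccontr)
  let ?S = "{C. C \<ge> 0 \<and> (\<forall>m x. L m x \<le> C * R m x)}"
  assume "\<not> L m x \<le> R m x"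
  then have lt: "R m x < L m x" by simp
  define e where "e = (L m x - R m x) / (R m x + 1)"
  have R0: "0 \<le> R m x" by (rule R)
  have e: "0 < e" using lt R0 by (simp add: e_def)
  have ne: "?S \<noteq> {}" using C0 by auto
  have bdd: "bdd_below ?S" by (rule bdd_belowI[of _ 0]) auto
  have "Inf ?S < 1 + e" using I e by simp
  then obtain C where C: "C \<in> ?S" "C < 1 + e" using cInf_less_iff[OF ne bdd] by auto
  have "L m x \<le> C * R m x" using C by auto
  also have "\<dots> \<le> (1 + e) * R m x" using C R0 by (intro mult_right_mono) auto
  also have "\<dots> = R m x + e * R m x" by algebra
  also have "\<dots> < R m x + e * (R m x + 1)" using e by simp
  also have "\<dots> = L m x" using R0 by (simp add: e_def)
  finally show False by simp
qed

definition EE :: "(('n::finite \<Rightarrow> complex) \<Rightarrow> real) \<Rightarrow> real" where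
  "EE N = (\<Sum>i\<in>UNIV. 1 / N (ev i))"

lemma EE_ge: "lattice_norm N \<Longrightarrow> 1 / N (ev i) \<le> EE N"
  unfolding EE_def by (rule member_le_sum) (auto simp: ln_nonneg)

lemma EE_nonneg: "lattice_norm N \<Longrightarrow> 0 \<le> EE N"
  unfolding EE_def by (rule sum_nonneg) (auto simp: ln_nonneg)

lemma coord_EE: "lattice_norm N \<Longrightarrow> cmod (x i) \<le> N x * EE N"
proof -
  assume N: "lattice_norm N"
  have "cmod (x i) \<le> N x / N (ev i)" by (rule ln_coord'[OF N])
  also have "\<dots> = N x * (1 / N (ev i))" by simp
  also have "\<dots> \<le> N x * EE N" by (rule mult_left_mono[OF EE_ge[OF N] ln_nonneg[OF N]])
  finally show ?thesis .
qed

lemma conc_nonempty: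
  assumes N: "lattice_norm N" and r: "0 < r"
  shows "(\<Sum>k<m. N (x k) powr r) powr (1/r)
     \<le> (N one_v * real CARD('n) powr (1/r) * EE N) * N (rsum_vec r m (x :: nat \<Rightarrow> ('n::finite \<Rightarrow> complex)))"
proof -
  define A where "A = N (rsum_vec r m x)"
  define rs where "rs i = (\<Sum>k<m. cmod (x k i) powr r) powr (1/r)" for i
  define X1 where "X1 = N one_v"
  have A0: "0 \<le> A" using ln_nonneg[OF N] by (simp add: A_def)
  have X10: "0 \<le> X1" using ln_nonneg[OF N] by (simp add: X1_def)
  have E0: "0 \<le> EE N" by (rule EE_nonneg[OF N])
  have a: "N (x k) powr r \<le> X1 powr r * (\<Sum>i\<in>UNIV. cmod (x k i) powr r)" for k
  proof -
    have "N (x k) \<le> (\<Sum>i\<in>UNIV. cmod (x k i) powr r) powr (1/r) * X1"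
      unfolding X1_def
    proof (rule ln_upper[OF N])
      fix i
      have "cmod (x k i) = (cmod (x k i) powr r) powr (1/r)" using r by (simp add: pr_inv2)
      also have "\<dots> \<le> (\<Sum>i\<in>UNIV. cmod (x k i) powr r) powr (1/r)"
        using r by (intro powr_mono2) (auto intro!: member_le_sum)
      finally show "cmod (x k i) \<le> (\<Sum>i\<in>UNIV. cmod (x k i) powr r) powr (1/r)" .
    qed
    then have "N (x k) powr r \<le> ((\<Sum>i\<in>UNIV. cmod (x k i) powr r) powr (1/r) * X1) powr r"
      using r ln_nonneg[OF N] by (intro powr_mono2) auto
    also have "\<dots> = X1 powr r * (\<Sum>i\<in>UNIV. cmod (x k i) powr r)"
      using r X10 by (simp add: powr_mult pr_inv1 sum_nonneg)
    finally show ?thesis .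
  qed
  have rsr: "rs i powr r = (\<Sum>k<m. cmod (x k i) powr r)" for i
    using r by (simp add: rs_def pr_inv1 sum_nonneg)
  have b: "(\<Sum>k<m. N (x k) powr r) \<le> X1 powr r * (\<Sum>i\<in>UNIV. rs i powr r)"
  proof -
    have "(\<Sum>k<m. N (x k) powr r) \<le> (\<Sum>k<m. X1 powr r * (\<Sum>i\<in>UNIV. cmod (x k i) powr r))"
      by (rule sum_mono) (rule a)
    also have "\<dots> = X1 powr r * (\<Sum>i\<in>UNIV. \<Sum>k<m. cmod (x k i) powr r)"
      by (simp add: sum_distrib_left sum.swap[of _ "{..<m}"])
    finally show ?thesis by (simp add: rsr)
  qed
  have c: "rs i powr r \<le> (A * EE N) powr r" for i
  proof -
    have "cmod (rsum_vec r m x i) \<le> A * EE N" unfolding A_def by (rule coord_EE[OF N])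
    then have "rs i \<le> A * EE N" by (simp add: rsum_vec_def rs_def)
    then show ?thesis using r by (intro powr_mono2) (auto simp: rs_def)
  qed
  have d: "(\<Sum>i\<in>UNIV. rs i powr r) \<le> real CARD('n) * (A * EE N) powr r"
    using sum_mono[of UNIV "\<lambda>i. rs i powr r" "\<lambda>_. (A * EE N) powr r"] c by simp
  have "(\<Sum>k<m. N (x k) powr r) \<le> X1 powr r * (real CARD('n) * (A * EE N) powr r)"
    using b d by (meson mult_left_mono order_trans powr_ge_zero)
  then have "(\<Sum>k<m. N (x k) powr r) powr (1/r) \<le> (X1 powr r * (real CARD('n) * (A * EE N) powr r)) powr (1/r)"
    using r by (intro powr_mono2) (auto intro!: sum_nonneg)
  also have "\<dots> = X1 * real CARD('n) powr (1/r) * A * EE N"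
    using r X10 A0 E0 by (simp add: powr_mult pr_inv2)
  finally show ?thesis by (simp add: A_def X1_def mult_ac)
qed

lemma conv_nonempty:
  assumes N: "lattice_norm N" and r: "0 < r"
  shows "N (rsum_vec r m (x :: nat \<Rightarrow> ('n::finite \<Rightarrow> complex)))
     \<le> (EE N * N one_v) * (\<Sum>k<m. N (x k) powr r) powr (1/r)"
proof -
  define T where "T = (\<Sum>k<m. N (x k) powr r)"
  have T0: "0 \<le> T" by (simp add: T_def sum_nonneg)
  have E0: "0 \<le> EE N" by (rule EE_nonneg[OF N])
  have "N (rsum_vec r m x) \<le> (EE N * T powr (1/r)) * N one_v"
  proof (rule ln_upper[OF N])
    fix i
    have "(\<Sum>k<m. cmod (x k i) powr r) \<le> (\<Sum>k<m. (N (x k) * EE N) powr r)"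
      using r by (intro sum_mono powr_mono2) (auto intro: coord_EE[OF N])
    also have "\<dots> = EE N powr r * T"
      using E0 ln_nonneg[OF N] by (simp add: T_def powr_mult sum_distrib_left mult_ac)
    finally have "(\<Sum>k<m. cmod (x k i) powr r) powr (1/r) \<le> (EE N powr r * T) powr (1/r)"
      using r by (intro powr_mono2) (auto intro!: sum_nonneg)
    also have "\<dots> = EE N * T powr (1/r)" using r E0 T0 by (simp add: powr_mult pr_inv2)
    finally show "cmod (rsum_vec r m x i) \<le> EE N * T powr (1/r)" by (simp add: rsum_vec_def)
  qed
  then show ?thesis by (simp add: T_def mult_ac)
qed

lemma conc_one:
  assumes N: "lattice_norm N" and r: "0 < r" and c: "concavity_const N r = 1"
  shows "(\<Sum>k<m. N (x k) powr r) powr (1/r) \<le> N (rsum_vec r m (x :: nat \<Rightarrow> ('n::finite \<Rightarrow> complex)))"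
proof (rule inf_one[of "\<lambda>m x. (\<Sum>k<m. N (x k) powr r) powr (1/r)" "\<lambda>m x. N (rsum_vec r m x)"])
  show "Inf {C. C \<ge> 0 \<and> (\<forall>m x. (\<Sum>k<m. N (x k) powr r) powr (1/r) \<le> C * N (rsum_vec r m x))} = 1"
    using c by (simp add: concavity_const_def)
  show "0 \<le> N one_v * real CARD('n) powr (1/r) * EE N"
    using ln_nonneg[OF N] EE_nonneg[OF N] by simp
  show "\<forall>m x. (\<Sum>k<m. N (x k) powr r) powr (1/r) \<le> (N one_v * real CARD('n) powr (1/r) * EE N) * N (rsum_vec r m x)"
    using conc_nonempty[OF N r] by blast
  show "\<And>m x. 0 \<le> N (rsum_vec r m x)" using ln_nonneg[OF N] by blast
qed

lemma conv_one:
  assumes N: "lattice_norm N" and r: "0 < r" and c: "convexity_const N r = 1"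
  shows "N (rsum_vec r m (x :: nat \<Rightarrow> ('n::finite \<Rightarrow> complex))) \<le> (\<Sum>k<m. N (x k) powr r) powr (1/r)"
proof (rule inf_one[of "\<lambda>m x. N (rsum_vec r m x)" "\<lambda>m x. (\<Sum>k<m. N (x k) powr r) powr (1/r)"])
  show "Inf {C. C \<ge> 0 \<and> (\<forall>m x. N (rsum_vec r m x) \<le> C * (\<Sum>k<m. N (x k) powr r) powr (1/r))} = 1"
    using c by (simp add: convexity_const_def)
  show "0 \<le> EE N * N one_v"
    using ln_nonneg[OF N] EE_nonneg[OF N] by simp
  show "\<forall>m x. N (rsum_vec r m x) \<le> (EE N * N one_v) * (\<Sum>k<m. N (x k) powr r) powr (1/r)"
    using conv_nonempty[OF N r] by blast
  show "\<And>m x. 0 \<le> (\<Sum>k<m. N (x k) powr r) powr (1/r)" by simp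
qed

lemma rsum2:
  assumes r: "0 < r" and v: "nneg v" and u: "nneg u"
  shows "rsum_vec r 2 (\<lambda>k. if k = 0 then rt r v else rt r u) = rt r (v + u)"
  using v u r by (auto simp: rsum_vec_def rt_def fun_eq_iff numeral_2_eq_2 lessThan_Suc nneg_def pr_inv1 add.commute)

lemma sum2: "(\<Sum>k<(2::nat). f k) = f 0 + (f 1 :: real)"
  by (simp add: numeral_2_eq_2 lessThan_Suc)

lemma PN_super:
  assumes N: "lattice_norm N" and r: "0 < r" and c: "concavity_const N r = 1"
    and v: "nneg v" and u: "nneg u"
  shows "PN N r v + PN N r u \<le> PN N r (v + u)"
proof -
  have "(PN N r v + PN N r u) powr (1/r) \<le> N (rt r (v + u))"
    using conc_one[OF N r c, where m=2 and x="\<lambda>k. if k = 0 then rt r v else rt r u"] rsum2[OF r v u]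
    by (simp add: sum2 PN_def)
  then have "((PN N r v + PN N r u) powr (1/r)) powr r \<le> N (rt r (v + u)) powr r"
    using r by (intro powr_mono2) auto
  then show ?thesis using r by (simp add: pr_inv1 PN_def)
qed

lemma PN_sub:
  assumes N: "lattice_norm N" and r: "0 < r" and c: "convexity_const N r = 1"
    and v: "nneg v" and u: "nneg u"
  shows "PN N r (v + u) \<le> PN N r v + PN N r u"
proof -
  have "N (rt r (v + u)) \<le> (PN N r v + PN N r u) powr (1/r)"
    using conv_one[OF N r c, where m=2 and x="\<lambda>k. if k = 0 then rt r v else rt r u"] rsum2[OF r v u]
    by (simp add: sum2 PN_def)
  then have "N (rt r (v + u)) powr r \<le> ((PN N r v + PN N r u) powr (1/r)) powr r"
    using r ln_nonneg[OF N] by (intro powr_mono2) auto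
  then show ?thesis using r by (simp add: pr_inv1 PN_def)
qed


lemma inner_sum': "inner (a::real^'n::finite) x = (\<Sum>i\<in>UNIV. a$i * x$i)"
  by (simp add: inner_vec_def)

definition onev :: "real^'n::finite" where "onev = (\<chi> i. 1)"

lemma nneg_onev: "nneg onev" by (simp add: nneg_def onev_def)
lemma onev_ne: "(onev :: real^'n::finite) \<noteq> 0" by (simp add: onev_def vec_eq_iff)

lemma nneg_add: "nneg v \<Longrightarrow> nneg u \<Longrightarrow> nneg (v + u)" by (simp add: nneg_def)
lemma nneg_scale: "nneg v \<Longrightarrow> 0 \<le> c \<Longrightarrow> nneg (c *\<^sub>R v)" by (simp add: nneg_def)

lemma PN_normalize:
  assumes N: "lattice_norm N" and r: "0 < r" and v: "nneg v" "0 < PN N r v"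
  shows "PN N r ((1 / PN N r v) *\<^sub>R v) = 1"
  using PN_homog[OF N r, of "1 / PN N r v" v] v by simp

lemma sep_X:
  assumes N: "lattice_norm N" and r: "0 < r" and c: "concavity_const N r = 1"
    and t: "nneg t" and Pt: "PN N r t < 1"
  shows "\<exists>w. (\<forall>i. 0 < w$i) \<and> (\<Sum>i\<in>UNIV. w$i * t$i) < 1 \<and>
      (\<forall>y. nneg y \<longrightarrow> PN N r y \<le> (\<Sum>i\<in>UNIV. w$i * y$i))"
proof -
  define U where "U = {v \<in> {v. nneg v}. (\<lambda>_. 1) v \<le> PN N r v}"
  have Ui: "v \<in> U \<longleftrightarrow> nneg v \<and> 1 \<le> PN N r v" for v by (simp add: U_def)
  have cvx: "convex U"
    unfolding convex_def
  proof (intro ballI allI impI)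
    fix x y :: "real^'a" and a b :: real
    assume x: "x \<in> U" and y: "y \<in> U" and ab: "0 \<le> a" "0 \<le> b" "a + b = 1"
    have xn: "nneg x" and yn: "nneg y" using x y Ui by auto
    have "1 = a * 1 + b * 1" using ab by simp
    also have "\<dots> \<le> a * PN N r x + b * PN N r y"
      using x y ab Ui by (intro add_mono mult_left_mono) auto
    also have "\<dots> = PN N r (a *\<^sub>R x) + PN N r (b *\<^sub>R y)"
      using PN_homog[OF N r] ab xn yn by simp
    also have "\<dots> \<le> PN N r (a *\<^sub>R x + b *\<^sub>R y)"
      by (rule PN_super[OF N r c]) (use ab xn yn in \<open>auto intro: nneg_scale\<close>)
    finally show "a *\<^sub>R x + b *\<^sub>R y \<in> U"
      using Ui ab xn yn by (auto intro!: nneg_add nneg_scale)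
  qed
  have cl: "closed U" unfolding U_def
    by (rule continuous_on_closed_Collect_le[OF continuous_on_const PN_cont[OF N r] closed_nneg])
  have tU: "t \<notin> U" using Pt Ui by auto
  obtain a b where ab: "inner a t < b" "\<forall>x\<in>U. b < inner a x"
    using separating_hyperplane_closed_point[OF cvx cl tU] by blast
  define u0 :: "real^'a" where "u0 = (1 / PN N r onev) *\<^sub>R onev"
  have P1: "0 < PN N r onev" by (rule PN_pos[OF N r nneg_onev onev_ne])
  have u0n: "nneg u0" unfolding u0_def using P1 by (intro nneg_scale nneg_onev) auto
  have u0: "u0 \<in> U" using PN_normalize[OF N r nneg_onev P1] u0n Ui by (simp add: u0_def)
  have apos: "0 \<le> a$j" for j
  proof (rule ccontr)
    assume "\<not> 0 \<le> a$j"
    then have aj: "a$j < 0" by simp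
    define l where "l = (inner a u0 - b) / (- a$j)"
    have bu: "b < inner a u0" using ab u0 by auto
    have l0: "0 \<le> l" using aj bu by (simp add: l_def divide_nonneg_neg)
    have "u0 + l *\<^sub>R axis j 1 \<in> U"
    proof -
      have n: "nneg (u0 + l *\<^sub>R axis j 1)" using u0n l0 by (auto simp: nneg_def axis_def)
      have "1 \<le> PN N r u0" using u0 Ui by auto
      also have "\<dots> \<le> PN N r (u0 + l *\<^sub>R axis j 1)"
        by (rule PN_mono[OF N r u0n]) (use l0 in \<open>auto simp: axis_def\<close>)
      finally show ?thesis using n Ui by auto
    qed
    then have "b < inner a (u0 + l *\<^sub>R axis j 1)" using ab by auto
    also have "inner a (u0 + l *\<^sub>R axis j 1) = inner a u0 + l * a$j"
      by (simp add: inner_add_right inner_axis)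
    also have "\<dots> = b" using aj by (simp add: l_def)
    finally show False by simp
  qed
  have at0: "0 \<le> inner a t" unfolding inner_sum' using apos t
    by (auto intro!: sum_nonneg simp: nneg_def)
  have b0: "0 < b" using ab at0 by simp
  define w where "w = (1 / b) *\<^sub>R a"
  have wi: "w$i = a$i / b" for i by (simp add: w_def)
  have sw: "(\<Sum>i\<in>UNIV. w$i * y$i) = inner a y / b" for y
    by (simp add: wi inner_sum' sum_divide_distrib)
  have key: "PN N r y \<le> (\<Sum>i\<in>UNIV. w$i * y$i)" if y: "nneg y" for y
  proof (cases "PN N r y = 0")
    case True
    then show ?thesis using y apos b0 by (auto simp: wi nneg_def intro!: sum_nonneg)
  next
    case False
    then have Py: "0 < PN N r y" using PN_nonneg[of N r y] by simp
    have y'n: "nneg ((1 / PN N r y) *\<^sub>R y)" using y Py by (intro nneg_scale) auto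
    have "(1 / PN N r y) *\<^sub>R y \<in> U" using PN_normalize[OF N r y Py] y'n Ui by simp
    then have "b < inner a ((1 / PN N r y) *\<^sub>R y)" using ab by auto
    then have "b < inner a y / PN N r y" by simp
    then have "b * PN N r y < inner a y" using Py by (simp add: field_simps)
    then have "PN N r y < inner a y / b" using b0 by (simp add: field_simps)
    then show ?thesis by (simp add: sw)
  qed
  show ?thesis
  proof (intro exI conjI allI impI)
    fix i
    have "PN N r (axis i 1) \<le> (\<Sum>j\<in>UNIV. w$j * (axis i 1 :: real^'a)$j)"
      by (rule key) (auto simp: nneg_def axis_def)
    also have "\<dots> = w$i" by (simp add: axis_def if_distrib cong: if_cong)
    finally show "0 < w$i" using PN_axis_pos[OF N r, of i] by simp
  next
    show "(\<Sum>i\<in>UNIV. w$i * t$i) < 1" using ab b0 by (simp add: sw)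
  next
    fix y :: "real^'a" assume "nneg y" then show "PN N r y \<le> (\<Sum>i\<in>UNIV. w$i * y$i)" by (rule key)
  qed
qed


lemma loz:
  assumes N: "lattice_norm N" and r: "0 < r" and c: "convexity_const N r = 1"
    and p: "nneg p"
  shows "\<exists>s. nneg s \<and> PN N r s \<le> 1 \<and> (\<forall>i. 0 < p$i \<longrightarrow> 0 < s$i) \<and>
     (\<forall>y. nneg y \<and> PN N r y \<le> 1 \<longrightarrow>
        (\<Sum>i\<in>{i. 0 < p$i}. p$i * y$i / s$i) \<le> (\<Sum>i\<in>{i. 0 < p$i}. p$i))"
proof -
  define K where "K = {x \<in> {v. nneg v}. PN N r x \<le> (\<lambda>_. 1) x}"
  have Ki: "v \<in> K \<longleftrightarrow> nneg v \<and> PN N r v \<le> 1" for v by (simp add: K_def)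
  define S where "S = {i. 0 < p$i}"
  have cl: "closed K" unfolding K_def
    by (rule continuous_on_closed_Collect_le[OF PN_cont[OF N r] continuous_on_const closed_nneg])
  have bd: "bounded K"
  proof (rule bounded_subset[OF bounded_cbox])
    show "K \<subseteq> cbox 0 (\<chi> i. 1 / PN N r (axis i 1))"
    proof
      fix v assume v: "v \<in> K"
      have "v$i \<le> 1 / PN N r (axis i 1)" for i
      proof -
        have "v$i * PN N r (axis i 1) \<le> 1"
          using PN_coord[OF N r, of v i] v Ki by auto
        then show ?thesis using PN_axis_pos[OF N r, of i] by (simp add: field_simps)
      qed
      then show "v \<in> cbox 0 (\<chi> i. 1 / PN N r (axis i 1))"
        using v Ki by (auto simp: mem_box_cart nneg_def)
    qed
  qed
  have cpt: "compact K" using cl bd by (simp add: compact_eq_bounded_closed)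
  have cvx: "(1 - h) *\<^sub>R x + h *\<^sub>R y \<in> K" if "x \<in> K" "y \<in> K" "0 \<le> h" "h \<le> 1" for x y h
  proof -
    have xn: "nneg x" and yn: "nneg y" using that Ki by auto
    have "PN N r ((1 - h) *\<^sub>R x + h *\<^sub>R y) \<le> PN N r ((1 - h) *\<^sub>R x) + PN N r (h *\<^sub>R y)"
      by (rule PN_sub[OF N r c]) (use that xn yn in \<open>auto intro: nneg_scale\<close>)
    also have "\<dots> = (1 - h) * PN N r x + h * PN N r y"
      using PN_homog[OF N r] that xn yn by simp
    also have "\<dots> \<le> (1 - h) * 1 + h * 1"
      using that Ki by (intro add_mono mult_left_mono) auto
    finally show ?thesis using Ki that xn yn by (auto intro!: nneg_add nneg_scale)
  qed
  define G where "G x = (\<Prod>i\<in>S. (x$i) powr (p$i))" for x :: "real^'a"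
  have cont: "continuous_on K G" unfolding G_def
    by (intro continuous_on_prod continuous_on_powr' continuous_intros)
       (auto simp: Ki nneg_def S_def)
  define u0 :: "real^'a" where "u0 = (1 / PN N r onev) *\<^sub>R onev"
  have P1: "0 < PN N r onev" by (rule PN_pos[OF N r nneg_onev onev_ne])
  have u0n: "nneg u0" unfolding u0_def using P1 by (intro nneg_scale nneg_onev) auto
  have u0: "u0 \<in> K" using PN_normalize[OF N r nneg_onev P1] u0n Ki by (simp add: u0_def)
  have Gu0: "0 < G u0" unfolding G_def using P1 by (intro prod_pos) (auto simp: u0_def onev_def)
  obtain s where s: "s \<in> K" "\<forall>y\<in>K. G y \<le> G s"
    using continuous_attains_sup[OF cpt _ cont] u0 by blast
  have Gs: "0 < G s" using s u0 Gu0 by force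
  have sn: "nneg s" using s Ki by auto
  have spos: "0 < s$i" if "i \<in> S" for i
  proof (rule ccontr)
    assume "\<not> 0 < s$i"
    then have "s$i = 0" using sn by (auto simp: nneg_def intro: antisym)
    then have "G s = 0" unfolding G_def using that by (intro prod_zero) auto
    then show False using Gs by simp
  qed
  have main: "(\<Sum>i\<in>S. p$i * ((y$i - s$i) / s$i)) \<le> 0" if y: "y \<in> K" for y
  proof (rule ccontr)
    define D where "D = (\<Sum>i\<in>S. p$i * ((y$i - s$i) / s$i))"
    assume "\<not> ?thesis"
    then have D: "0 < D" by (simp add: D_def)
    define L where "L h = (\<Sum>i\<in>S. p$i * ln (s$i + h * (y$i - s$i)))" for h
    have der: "(L has_real_derivative D) (at 0)"
      unfolding L_def D_def
        by (auto intro!: derivative_eq_intros sum.cong simp: spos mult.commute)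
    obtain d where d: "d > 0" "\<And>h. 0 < h \<Longrightarrow> h < d \<Longrightarrow> L 0 < L h"
      using DERIV_pos_inc_right[OF der D] by auto
    define h where "h = min (d/2) (1/2)"
    have h: "0 < h" "h < d" "h \<le> 1" using d by (auto simp: h_def)
    have Lh: "L 0 < L h" using d h by auto
    define sh where "sh = (1 - h) *\<^sub>R s + h *\<^sub>R y"
    have shK: "sh \<in> K" unfolding sh_def using cvx[OF s(1) y] h by auto
    have shi: "sh$i = s$i + h * (y$i - s$i)" for i by (simp add: sh_def algebra_simps)
    have yn: "nneg y" using y Ki by auto
    have shpos: "0 < sh$i" if "i \<in> S" for i
    proof -
      have "0 < (1 - h) * s$i" using spos[OF that] h by (intro mult_pos_pos) (auto simp: h_def)
      moreover have "0 \<le> h * y$i" using h yn by (auto simp: nneg_def)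
      ultimately show ?thesis by (simp add: sh_def)
    qed
    have lnG: "ln (G x) = (\<Sum>i\<in>S. p$i * ln (x$i))" if "\<And>i. i \<in> S \<Longrightarrow> 0 < x$i" for x
      unfolding G_def using that by (subst ln_prod) (auto simp: finite_subset dest: that)
    have "G sh \<le> G s" using s shK by auto
    moreover have "0 < G sh" unfolding G_def by (intro prod_pos ballI) (metis powr_gt_zero shpos less_irrefl)
    ultimately have "ln (G sh) \<le> ln (G s)" by simp
    also have "ln (G s) = L 0" using lnG[of s] spos by (simp add: L_def)
    also have "ln (G sh) = L h" using lnG[of sh] shpos by (simp add: L_def shi)
    finally show False using Lh by simp
  qed
  show ?thesis
  proof (intro exI conjI allI impI)
    show "nneg s" by (rule sn)
    show "PN N r s \<le> 1" using s Ki by auto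
    fix i assume "0 < p$i" then show "0 < s$i" using spos by (simp add: S_def)
  next
    fix y assume "nneg y \<and> PN N r y \<le> 1"
    then have y: "y \<in> K" using Ki by auto
    have "(\<Sum>i\<in>S. p$i * ((y$i - s$i) / s$i)) = (\<Sum>i\<in>S. p$i * y$i / s$i - p$i)"
    proof (rule sum.cong[OF refl])
      fix i assume "i \<in> S"
      then have "0 < s$i" by (rule spos)
      then show "p$i * ((y$i - s$i) / s$i) = p$i * y$i / s$i - p$i" by (simp add: field_simps)
    qed
    also have "\<dots> = (\<Sum>i\<in>S. p$i * y$i / s$i) - (\<Sum>i\<in>S. p$i)" by (simp add: sum_subtractf)
    finally show "(\<Sum>i\<in>{i. 0 < p$i}. p$i * y$i / s$i) \<le> (\<Sum>i\<in>{i. 0 < p$i}. p$i)"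
      using main[OF y] by (simp add: S_def)
  qed
qed


lemma powr_lt1: "0 \<le> x \<Longrightarrow> x < 1 \<Longrightarrow> 0 < r \<Longrightarrow> x powr r < (1::real)"
  using powr_less_mono2[of r x 1] by simp

lemma powr_lt1_rev: "0 \<le> x \<Longrightarrow> x powr r < 1 \<Longrightarrow> 0 < r \<Longrightarrow> x < (1::real)"
  using powr_mono2[of r 1 x] by force

lemma factor:
  assumes X: "lattice_norm X" and Y: "lattice_norm Y" and r: "0 < r"
    and cX: "concavity_const X r = 1" and cY: "convexity_const Y r = 1"
    and z: "X z < 1"
  shows "\<exists>a b. Y a < 1 \<and> (\<forall>u. Y u < 1 \<longrightarrow> X (\<lambda>i. b i * u i) < 1) \<and> z = (\<lambda>i. a i * b i)"
proof -
  define t :: "real^'a" where "t = (\<chi> i. cmod (z i) powr r)"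
  have tn: "nneg t" by (simp add: t_def nneg_def)
  have Pt: "PN X r t < 1" unfolding t_def PN_abs[OF X r] using z r ln_nonneg[OF X] by (intro powr_lt1) auto
  obtain w where w: "\<And>i. 0 < w$i" "(\<Sum>i\<in>UNIV. w$i * t$i) < 1"
      "\<And>y. nneg y \<Longrightarrow> PN X r y \<le> (\<Sum>i\<in>UNIV. w$i * y$i)"
    using sep_X[OF X r cX tn Pt] by blast
  define p :: "real^'a" where "p = (\<chi> i. w$i * t$i)"
  have pn: "nneg p" using w(1) tn by (auto simp: p_def nneg_def less_imp_le)
  define lam where "lam = (\<Sum>i\<in>UNIV. p$i)"
  have lam1: "lam < 1" using w(2) by (simp add: lam_def p_def)
  have lam0: "0 \<le> lam" using pn by (auto simp: lam_def nneg_def intro: sum_nonneg)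
  define S where "S = {i. 0 < p$i}"
  have Si: "i \<in> S \<longleftrightarrow> z i \<noteq> 0" for i
    using w(1)[of i] by (auto simp: S_def p_def t_def)
  obtain s where s: "nneg s" "PN Y r s \<le> 1" "\<And>i. 0 < p$i \<Longrightarrow> 0 < s$i"
    "\<And>y. nneg y \<Longrightarrow> PN Y r y \<le> 1 \<Longrightarrow> (\<Sum>i\<in>{i. 0 < p$i}. p$i * y$i / s$i) \<le> (\<Sum>i\<in>{i. 0 < p$i}. p$i)"
    using loz[OF Y r cY pn] by blast
  have sumS: "(\<Sum>i\<in>S. p$i) = lam"
  proof -
    have "(\<Sum>i\<in>UNIV. p$i) = (\<Sum>i\<in>S. p$i)"
      by (rule sum.mono_neutral_right) (use pn in \<open>auto simp: S_def nneg_def intro: antisym\<close>)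
    then show ?thesis by (simp add: lam_def)
  qed
  define mu where "mu = (1 + lam) / 2"
  have mu: "0 < mu" "mu < 1" "lam < mu" using lam0 lam1 by (auto simp: mu_def)
  define rho where "rho = mu powr (1/r)"
  have rho: "0 < rho" "rho < 1" using mu r by (auto simp: rho_def intro: powr_lt1)
  have rhor: "rho powr r = mu" using mu r by (simp add: rho_def pr_inv1)
  define a where "a i = complex_of_real (rho * s$i powr (1/r))" for i
  define b where "b i = (if z i = 0 then 0 else z i / a i)" for i
  have spos: "0 < s$i" if "z i \<noteq> 0" for i using s(3) Si[of i] that by (simp add: S_def)
  have ane: "a i \<noteq> 0" if "z i \<noteq> 0" for i using spos[OF that] rho by (simp add: a_def)
  have zab: "z = (\<lambda>i. a i * b i)"
    using ane by (auto simp: b_def fun_eq_iff)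
  have Ya: "Y a < 1"
  proof -
    have "a = (\<lambda>i. complex_of_real rho * rt r s i)" by (simp add: a_def rt_def fun_eq_iff)
    then have e1: "Y a = rho * Y (rt r s)" using ln_homog[OF Y] rho by simp
    have e2: "Y (rt r s) = PN Y r s powr (1/r)" using r ln_nonneg[OF Y] by (simp add: PN_def pr_inv2)
    have e3: "PN Y r s powr (1/r) \<le> 1" using s(2) r powr_mono2[of "1/r" "PN Y r s" 1] by (simp add: PN_nonneg)
    have "Y a \<le> rho" using e1 e2 e3 rho mult_left_le[of "Y (rt r s)" rho] by simp
    then show ?thesis using rho by simp
  qed
  have Xb: "X (\<lambda>i. b i * u i) < 1" if u: "Y u < 1" for u
  proof -
    define y :: "real^'a" where "y = (\<chi> i. cmod (u i) powr r)"
    have yn: "nneg y" by (simp add: y_def nneg_def)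
    have Py: "PN Y r y \<le> 1" unfolding y_def PN_abs[OF Y r]
      using u r ln_nonneg[OF Y] powr_lt1[of "Y u" r] by simp
    have bound: "(\<Sum>i\<in>S. p$i * y$i / s$i) \<le> lam" using s(4)[OF yn Py] sumS by (simp add: S_def)
    define v :: "real^'a" where "v = (\<chi> i. cmod (b i * u i) powr r)"
    have "X (\<lambda>i. b i * u i) powr r = PN X r v" unfolding v_def PN_abs[OF X r] ..
    also have "\<dots> \<le> (\<Sum>i\<in>UNIV. w$i * v$i)" by (rule w(3)) (simp add: v_def nneg_def)
    also have "\<dots> = (\<Sum>i\<in>UNIV. if i \<in> S then p$i * y$i / s$i / mu else 0)"
    proof (rule sum.cong[OF refl])
      fix i
      show "w$i * v$i = (if i \<in> S then p$i * y$i / s$i / mu else 0)"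
      proof (cases "z i = 0")
        case True then show ?thesis using Si[of i] r by (simp add: v_def b_def)
      next
        case False
        have si: "0 < s$i" by (rule spos[OF False])
        have "cmod (b i) = cmod (z i) / (rho * s$i powr (1/r))"
          using False si rho by (simp add: b_def a_def norm_divide norm_mult)
        then have "cmod (b i) powr r = cmod (z i) powr r / (mu * s$i)"
          using si rho r by (simp add: powr_divide powr_mult rhor pr_inv1)
        then have "v$i = t$i * y$i / (mu * s$i)"
          by (simp add: v_def t_def y_def norm_mult powr_mult)
        then show ?thesis using Si[of i] False by (simp add: p_def mult_ac)
      qed
    qed
    also have "\<dots> = (\<Sum>i\<in>S. p$i * y$i / s$i) / mu"
      by (simp add: sum.If_cases sum_divide_distrib)
    also have "\<dots> \<le> lam / mu" using bound mu by (simp add: divide_right_mono)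
    also have "\<dots> < 1" using mu by simp
    finally have "X (\<lambda>i. b i * u i) powr r < 1" .
    then show ?thesis by (rule powr_lt1_rev[OF ln_nonneg[OF X] _ r])
  qed
  have Xb': "\<forall>u. Y u < 1 \<longrightarrow> X (\<lambda>i. b i * u i) < 1" using Xb by blast
  show ?thesis by (rule exI[of _ a], rule exI[of _ b]) (use Ya Xb' zab in blast)
qed


lemma poly_mult:
  "poly_eval c F (\<lambda>i. x i * y i) = poly_eval (\<lambda>\<alpha>. c \<alpha> * (\<Prod>i\<in>UNIV. y i ^ \<alpha> i)) F x"
  unfolding poly_eval_def
  by (rule sum.cong[OF refl]) (simp add: power_mult_distrib prod.distrib mult_ac)

lemma poly_bdd:
  assumes N: "lattice_norm N"
  shows "bdd_above {cmod (poly_eval c F z) | z. N z < 1}"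
proof (rule bdd_aboveI, clarify)
  fix z assume z: "N z < 1"
  have zi: "cmod (z i) \<le> EE N" for i
  proof -
    have "N z * EE N \<le> EE N" using z EE_nonneg[OF N] ln_nonneg[OF N, of z] by (simp add: mult_left_le_one_le)
    then show ?thesis using coord_EE[OF N, of z i] by linarith
  qed
  have "cmod (poly_eval c F z) \<le> (\<Sum>\<alpha>\<in>F. cmod (c \<alpha>) * (\<Prod>i\<in>UNIV. cmod (z i) ^ \<alpha> i))"
    unfolding poly_eval_def by (rule order_trans[OF norm_sum]) (simp add: norm_mult prod_norm[symmetric] norm_power)
  also have "\<dots> \<le> (\<Sum>\<alpha>\<in>F. cmod (c \<alpha>) * (\<Prod>i\<in>UNIV. EE N ^ \<alpha> i))"
    by (intro sum_mono mult_left_mono prod_mono conjI power_mono zi) auto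
  finally show "cmod (poly_eval c F z) \<le> (\<Sum>\<alpha>\<in>F. cmod (c \<alpha>) * (\<Prod>i\<in>UNIV. EE N ^ \<alpha> i))" .
qed

lemma poly_sup_ge:
  "lattice_norm N \<Longrightarrow> N z < 1 \<Longrightarrow> cmod (poly_eval c F z) \<le> poly_sup N c F"
  unfolding poly_sup_def by (rule cSup_upper[OF _ poly_bdd]) auto

lemma poly_sup_le:
  assumes N: "lattice_norm N" and B: "\<And>z. N z < 1 \<Longrightarrow> cmod (poly_eval c F z) \<le> B"
  shows "poly_sup N c F \<le> B"
  unfolding poly_sup_def
proof (rule cSup_least)
  have "N (\<lambda>_. 0) < 1" using ln_zero[OF N] by simp
  then show "{cmod (poly_eval c F z) |z. N z < 1} \<noteq> {}" by blast
qed (use B in auto)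

theorem theorem2p12:
  fixes X Y :: "('n::finite \<Rightarrow> complex) \<Rightarrow> real" and r :: real
    and J :: "('n \<Rightarrow> nat) set"
  assumes "1 < r"
    and "lattice_norm X" and "lattice_norm Y"
    and "concavity_const X r = 1" and "convexity_const Y r = 1"
  shows "chi_mon X J \<le> chi_mon Y J"
proof -
  have r: "0 < r" using assms(1) by simp
  note X = assms(2) and Y = assms(3) and cX = assms(4) and cY = assms(5)
  define SX where "SX = {K. K \<ge> 0 \<and>
     (\<forall>F c \<epsilon>. finite F \<longrightarrow> F \<subseteq> J \<longrightarrow> (\<forall>\<alpha>. cmod (\<epsilon> \<alpha>) = 1) \<longrightarrow>
        poly_sup X (\<lambda>\<alpha>. \<epsilon> \<alpha> * c \<alpha>) F \<le> K * poly_sup X c F)}"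
  define SY where "SY = {K. K \<ge> 0 \<and>
     (\<forall>F c \<epsilon>. finite F \<longrightarrow> F \<subseteq> J \<longrightarrow> (\<forall>\<alpha>. cmod (\<epsilon> \<alpha>) = 1) \<longrightarrow>
        poly_sup Y (\<lambda>\<alpha>. \<epsilon> \<alpha> * c \<alpha>) F \<le> K * poly_sup Y c F)}"
  have sub: "SY \<subseteq> SX"
  proof
    fix K assume K: "K \<in> SY"
    have K0: "0 \<le> K" using K by (simp add: SY_def)
    have main: "poly_sup X (\<lambda>\<alpha>. \<epsilon> \<alpha> * c \<alpha>) F \<le> K * poly_sup X c F"
      if F: "finite F" "F \<subseteq> J" and e: "\<forall>\<alpha>. cmod (\<epsilon> \<alpha>) = 1" for F c \<epsilon>
    proof (rule poly_sup_le[OF X])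
      fix z assume z: "X z < 1"
      obtain a b where ab: "Y a < 1" "\<forall>u. Y u < 1 \<longrightarrow> X (\<lambda>i. b i * u i) < 1" "z = (\<lambda>i. a i * b i)"
        using factor[OF X Y r cX cY z] by blast
      define c' where "c' = (\<lambda>\<alpha>. c \<alpha> * (\<Prod>i\<in>UNIV. b i ^ \<alpha> i))"
      have "poly_eval (\<lambda>\<alpha>. \<epsilon> \<alpha> * c \<alpha>) F z = poly_eval (\<lambda>\<alpha>. \<epsilon> \<alpha> * c' \<alpha>) F a"
        unfolding ab(3) poly_mult by (simp add: c'_def mult_ac)
      then have "cmod (poly_eval (\<lambda>\<alpha>. \<epsilon> \<alpha> * c \<alpha>) F z) \<le> poly_sup Y (\<lambda>\<alpha>. \<epsilon> \<alpha> * c' \<alpha>) F"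
        using poly_sup_ge[OF Y ab(1)] by simp
      also have "\<dots> \<le> K * poly_sup Y c' F" using K F e by (simp add: SY_def)
      also have "\<dots> \<le> K * poly_sup X c F"
      proof (rule mult_left_mono[OF _ K0], rule poly_sup_le[OF Y])
        fix u assume u: "Y u < 1"
        have "poly_eval c' F u = poly_eval c F (\<lambda>i. u i * b i)"
          unfolding poly_mult by (simp add: c'_def)
        also have "(\<lambda>i. u i * b i) = (\<lambda>i. b i * u i)" by (simp add: mult.commute)
        finally show "cmod (poly_eval c' F u) \<le> poly_sup X c F"
          using poly_sup_ge[OF X] ab(2) u by simp
      qed
      finally show "cmod (poly_eval (\<lambda>\<alpha>. \<epsilon> \<alpha> * c \<alpha>) F z) \<le> K * poly_sup X c F" .
    qed
    show "K \<in> SX" using K0 main by (simp add: SX_def)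
  qed
  have "Inf (ereal ` SX) \<le> Inf (ereal ` SY)"
    by (rule Inf_superset_mono) (use sub in blast)
  then show ?thesis by (simp add: chi_mon_def SX_def SY_def)
qed

end
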